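(* Let $\mathsf{K}$ be a congruence permutable variety and $\mathbf{B}\in\mathsf{K}$. If some subalgebra $\mathbf{A}\leq\mathbf{B}$ is fully epic in $\mathsf{K}$, then $\mathbf{B}$ is finitely subdirectly irreducible.
   Context: A variety is congruence permutable if $\theta_1\circ\theta_2=\theta_2\circ\theta_1$ for all congruences of every member. An algebra is finitely subdirectly irreducible (FSI) if it is nontrivial and its identity congruence is not the intersection of two congruences both different from the identity. $\mathbf{A}\leq\mathbf{B}$ is epic in $\mathsf{K}$ if for all $\mathbf{C}\in\mathsf{K}$ and homomorphisms $g,h\colon\mathbf{B}\to\mathbf{C}$, $g{\upharpoonright}_A=h{\upharpoonright}_A$ implies $g=h$; it is full in $\mathsf{K}$ if it is proper, almost total ($B=\mathrm{Sg}^{\mathbf{B}}(A\cup\{b\})$ for some $b$), and every congruence $\theta\neq\mathrm{id}_B$ of $\mathbf{B}$ relates each $b\in B$ to some $a\in A$; fully epic means full and epic. *)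

theory Defs
  imports Main
begin

type_synonym ('f, 'a) alg = "'a set \<times> ('f \<Rightarrow> 'a list \<Rightarrow> 'a)"

datatype ('f, 'v) trm = Var 'v | App 'f "('f, 'v) trm list"

fun eval :: "('f \<Rightarrow> 'a list \<Rightarrow> 'a) \<Rightarrow> ('v \<Rightarrow> 'a) \<Rightarrow> ('f, 'v) trm \<Rightarrow> 'a" where
  "eval F \<sigma> (Var v) = \<sigma> v"
| "eval F \<sigma> (App f ts) = F f (map (eval F \<sigma>) ts)"

fun wf_trm :: "('f \<Rightarrow> nat) \<Rightarrow> ('f, 'v) trm \<Rightarrow> bool" where
  "wf_trm ar (Var v) = True"
| "wf_trm ar (App f ts) = (length ts = ar f \<and> (\<forall>t\<in>set ts. wf_trm ar t))"

definition closed_under :: "('f \<Rightarrow> nat) \<Rightarrow> ('f \<Rightarrow> 'a list \<Rightarrow> 'a) \<Rightarrow> 'a set \<Rightarrow> bool" where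
  "closed_under ar F S \<longleftrightarrow>
     (\<forall>f xs. length xs = ar f \<and> set xs \<subseteq> S \<longrightarrow> F f xs \<in> S)"

definition algebra :: "('f \<Rightarrow> nat) \<Rightarrow> ('f, 'a) alg \<Rightarrow> bool" where
  "algebra ar A \<longleftrightarrow> fst A \<noteq> {} \<and> closed_under ar (snd A) (fst A)"

definition subalgebra :: "('f \<Rightarrow> nat) \<Rightarrow> 'a set \<Rightarrow> ('f, 'a) alg \<Rightarrow> bool" where
  "subalgebra ar S B \<longleftrightarrow> S \<noteq> {} \<and> S \<subseteq> fst B \<and> closed_under ar (snd B) S"

definition Sg :: "('f \<Rightarrow> nat) \<Rightarrow> ('f, 'a) alg \<Rightarrow> 'a set \<Rightarrow> 'a set" where
  "Sg ar B X = \<Inter>{S. S \<subseteq> fst B \<and> X \<subseteq> S \<and> closed_under ar (snd B) S}"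

definition hom :: "('f \<Rightarrow> nat) \<Rightarrow> ('f, 'a) alg \<Rightarrow> ('f, 'b) alg \<Rightarrow> ('a \<Rightarrow> 'b) \<Rightarrow> bool" where
  "hom ar A C h \<longleftrightarrow> h ` fst A \<subseteq> fst C \<and>
     (\<forall>f xs. length xs = ar f \<and> set xs \<subseteq> fst A \<longrightarrow> h (snd A f xs) = snd C f (map h xs))"

definition congruence :: "('f \<Rightarrow> nat) \<Rightarrow> ('f, 'a) alg \<Rightarrow> 'a rel \<Rightarrow> bool" where
  "congruence ar A \<theta> \<longleftrightarrow> equiv (fst A) \<theta> \<and>
     (\<forall>f xs ys. length xs = ar f \<and> length ys = ar f \<and> set xs \<subseteq> fst A \<and> set ys \<subseteq> fst A
        \<and> list_all2 (\<lambda>x y. (x, y) \<in> \<theta>) xs ys \<longrightarrow> (snd A f xs, snd A f ys) \<in> \<theta>)"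

text \<open>Equational classes (varieties, by Birkhoff's HSP theorem): Sigma is a set of
identities between well-formed terms in the variables nat.\<close>
definition satisfies :: "('f, 'a) alg \<Rightarrow> ('f, nat) trm \<times> ('f, nat) trm \<Rightarrow> bool" where
  "satisfies A e \<longleftrightarrow>
     (\<forall>\<sigma>. range \<sigma> \<subseteq> fst A \<longrightarrow> eval (snd A) \<sigma> (fst e) = eval (snd A) \<sigma> (snd e))"

definition identities :: "('f \<Rightarrow> nat) \<Rightarrow> (('f, nat) trm \<times> ('f, nat) trm) set \<Rightarrow> bool" where
  "identities ar \<Sigma> \<longleftrightarrow> (\<forall>e\<in>\<Sigma>. wf_trm ar (fst e) \<and> wf_trm ar (snd e))"

definition in_var :: "('f \<Rightarrow> nat) \<Rightarrow> (('f, nat) trm \<times> ('f, nat) trm) set \<Rightarrow> ('f, 'a) alg \<Rightarrow> bool" where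
  "in_var ar \<Sigma> A \<longleftrightarrow> algebra ar A \<and> (\<forall>e\<in>\<Sigma>. satisfies A e)"

text \<open>Universe type used for the members of K quantified over inside definitions
(HOL cannot quantify over types inside a formula). It is infinite and large enough
to contain isomorphic copies of every algebra that matters.\<close>
type_synonym ('f, 'a) univ = "('f, 'a + 'a) trm"

definition cong_permutable :: "('f \<Rightarrow> nat) \<Rightarrow> ('f, 'a) alg \<Rightarrow> bool" where
  "cong_permutable ar A \<longleftrightarrow>
     (\<forall>\<theta>1 \<theta>2. congruence ar A \<theta>1 \<and> congruence ar A \<theta>2 \<longrightarrow> \<theta>1 O \<theta>2 = \<theta>2 O \<theta>1)"

definition cp_variety :: "('f \<Rightarrow> nat) \<Rightarrow> (('f, nat) trm \<times> ('f, nat) trm) set \<Rightarrow> 'a itself \<Rightarrow> bool" where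
  "cp_variety ar \<Sigma> (_ :: 'a itself) \<longleftrightarrow>
     (\<forall>C :: ('f, ('f, 'a) univ) alg. in_var ar \<Sigma> C \<longrightarrow> cong_permutable ar C)"

definition FSI :: "('f \<Rightarrow> nat) \<Rightarrow> ('f, 'a) alg \<Rightarrow> bool" where
  "FSI ar B \<longleftrightarrow> (\<exists>x\<in>fst B. \<exists>y\<in>fst B. x \<noteq> y) \<and>
     (\<forall>\<theta>1 \<theta>2. congruence ar B \<theta>1 \<and> congruence ar B \<theta>2 \<and> \<theta>1 \<inter> \<theta>2 = Id_on (fst B)
        \<longrightarrow> \<theta>1 = Id_on (fst B) \<or> \<theta>2 = Id_on (fst B))"

definition epic_in :: "('f \<Rightarrow> nat) \<Rightarrow> (('f, nat) trm \<times> ('f, nat) trm) set \<Rightarrow> 'a set \<Rightarrow> ('f, 'a) alg \<Rightarrow> bool" where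
  "epic_in ar \<Sigma> A B \<longleftrightarrow>
     (\<forall>(C :: ('f, ('f, 'a) univ) alg) g h. in_var ar \<Sigma> C \<and> hom ar B C g \<and> hom ar B C h
        \<and> (\<forall>a\<in>A. g a = h a) \<longrightarrow> (\<forall>b\<in>fst B. g b = h b))"

definition full_in :: "('f \<Rightarrow> nat) \<Rightarrow> 'a set \<Rightarrow> ('f, 'a) alg \<Rightarrow> bool" where
  "full_in ar A B \<longleftrightarrow> A \<subset> fst B \<and>
     (\<exists>b\<in>fst B. Sg ar B (A \<union> {b}) = fst B) \<and>
     (\<forall>\<theta>. congruence ar B \<theta> \<and> \<theta> \<noteq> Id_on (fst B) \<longrightarrow> (\<forall>b\<in>fst B. \<exists>a\<in>A. (b, a) \<in> \<theta>))"

definition fully_epic_in :: "('f \<Rightarrow> nat) \<Rightarrow> (('f, nat) trm \<times> ('f, nat) trm) set \<Rightarrow> 'a set \<Rightarrow> ('f, 'a) alg \<Rightarrow> bool" where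
  "fully_epic_in ar \<Sigma> A B \<longleftrightarrow> full_in ar A B \<and> epic_in ar \<Sigma> A B"

end

theory Submission imports Defs begin

lemma eval_closed:
  assumes "closed_under ar F S" "range \<sigma> \<subseteq> S" "wf_trm ar t"
  shows "eval F \<sigma> t \<in> S"
  using assms(3)
proof (induction t)
  case (Var x) then show ?case using assms(2) by auto
next
  case (App f ts)
  have "set (map (eval F \<sigma>) ts) \<subseteq> S" using App by auto
  moreover have "length (map (eval F \<sigma>) ts) = ar f" using App by simp
  ultimately show ?case using assms(1) unfolding closed_under_def by simp
qed

lemma eval_hom:
  assumes "hom ar A C h" "closed_under ar (snd A) (fst A)" "range \<sigma> \<subseteq> fst A" "wf_trm ar t"
  shows "h (eval (snd A) \<sigma> t) = eval (snd C) (h \<circ> \<sigma>) t"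
  using assms(4)
proof (induction t)
  case (Var x) then show ?case by simp
next
  case (App f ts)
  have s: "set (map (eval (snd A) \<sigma>) ts) \<subseteq> fst A" using App eval_closed[OF assms(2,3)] by auto
  have l: "length (map (eval (snd A) \<sigma>) ts) = ar f" using App by simp
  have "h (eval (snd A) \<sigma> (App f ts)) = snd C f (map h (map (eval (snd A) \<sigma>) ts))"
    using assms(1) s l unfolding hom_def by simp
  also have "map h (map (eval (snd A) \<sigma>) ts) = map (eval (snd C) (h \<circ> \<sigma>)) ts"
    using App by (auto simp: comp_def)
  finally show ?case by (simp add: comp_def)
qed

lemma image_in_var:
  assumes ids: "identities ar \<Sigma>" and A: "in_var ar \<Sigma> A" and h: "hom ar A C h"
    and sur: "h ` fst A = fst C"
  shows "in_var ar \<Sigma> C"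
proof -
  have clA: "closed_under ar (snd A) (fst A)" and neA: "fst A \<noteq> {}"
    using A unfolding in_var_def algebra_def by auto
  have clC: "closed_under ar (snd C) (fst C)"
    unfolding closed_under_def
  proof (intro allI impI)
    fix f ys assume a: "length ys = ar f \<and> set ys \<subseteq> fst C"
    define xs where "xs = map (inv_into (fst A) h) ys"
    have ys0: "map h xs = ys" unfolding xs_def map_map
      by (rule map_idI) (use a sur in \<open>auto intro!: f_inv_into_f[where f=h]\<close>)
    hence ys: "ys = map h xs" by simp
    have xs: "set xs \<subseteq> fst A" unfolding xs_def by (use a sur in \<open>auto intro!: inv_into_into[where f=h]\<close>)
    have "h (snd A f xs) = snd C f ys" using h xs a ys unfolding hom_def by auto
    moreover have "snd A f xs \<in> fst A" using clA xs a ys unfolding closed_under_def by auto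
    ultimately show "snd C f ys \<in> fst C" using sur by (metis imageI)
  qed
  have "satisfies C e" if e: "e \<in> \<Sigma>" for e
    unfolding satisfies_def
  proof (intro allI impI)
    fix \<sigma> :: "nat \<Rightarrow> _" assume r: "range \<sigma> \<subseteq> fst C"
    define \<sigma>' where "\<sigma>' = (\<lambda>v. inv_into (fst A) h (\<sigma> v))"
    have r': "range \<sigma>' \<subseteq> fst A" unfolding \<sigma>'_def by (use r sur in \<open>auto intro!: inv_into_into[where f=h]\<close>)
    have hs: "h \<circ> \<sigma>' = \<sigma>" unfolding \<sigma>'_def by (use r sur in \<open>auto intro!: ext f_inv_into_f[where f=h] range_subsetD[OF r]\<close>)
    have wf: "wf_trm ar (fst e)" "wf_trm ar (snd e)" using ids e unfolding identities_def by auto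
    have "eval (snd A) \<sigma>' (fst e) = eval (snd A) \<sigma>' (snd e)"
      using A e r' unfolding in_var_def satisfies_def by auto
    then show "eval (snd C) \<sigma> (fst e) = eval (snd C) \<sigma> (snd e)"
      using eval_hom[OF h clA r' wf(1)] eval_hom[OF h clA r' wf(2)] hs by simp
  qed
  then show ?thesis using clC neA sur unfolding in_var_def algebra_def by auto
qed

lemma cong_sub: "congruence ar A \<theta> \<Longrightarrow> \<theta> \<subseteq> fst A \<times> fst A"
  unfolding congruence_def equiv_def refl_on_def by auto

lemma cong_map_mem:
  assumes "inj_on e (fst A)" "congruence ar A \<theta>" "x \<in> fst A" "y \<in> fst A"
  shows "(e x, e y) \<in> (\<lambda>(x,y). (e x, e y)) ` \<theta> \<longleftrightarrow> (x, y) \<in> \<theta>"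
proof
  assume "(e x, e y) \<in> (\<lambda>(x,y). (e x, e y)) ` \<theta>"
  then obtain u v where uv: "(u,v) \<in> \<theta>" "e x = e u" "e y = e v" by auto
  have "u \<in> fst A" "v \<in> fst A" using uv cong_sub[OF assms(2)] by auto
  then have "u = x" "v = y" using uv assms(1,3,4) unfolding inj_on_def by metis+
  then show "(x, y) \<in> \<theta>" using uv by simp
qed force

lemma cong_map:
  assumes h: "hom ar A A' e" and inj: "inj_on e (fst A)" and sur: "e ` fst A = fst A'"
    and c: "congruence ar A \<theta>"
  shows "congruence ar A' ((\<lambda>(x,y). (e x, e y)) ` \<theta>)" (is "congruence ar A' ?T")
proof -
  have sub: "\<theta> \<subseteq> fst A \<times> fst A" using cong_sub[OF c] .
  have eq: "equiv (fst A) \<theta>" using c unfolding congruence_def by simp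
  have mem: "\<And>x y. x \<in> fst A \<Longrightarrow> y \<in> fst A \<Longrightarrow> (e x, e y) \<in> ?T \<longleftrightarrow> (x, y) \<in> \<theta>"
    using cong_map_mem[OF inj c] by blast
  have Tsub: "?T \<subseteq> fst A' \<times> fst A'" using sub sur by auto
  have "equiv (fst A') ?T"
    unfolding equiv_def refl_on_def sym_def trans_def
  proof (intro conjI allI impI ballI)
    show "?T \<subseteq> fst A' \<times> fst A'" by (rule Tsub)
  next
    fix x' assume "x' \<in> fst A'"
    then obtain x where "x \<in> fst A" "x' = e x" using sur by auto
    then show "(x', x') \<in> ?T" using mem eq unfolding equiv_def refl_on_def by auto
  next
    fix x' y' assume a: "(x', y') \<in> ?T"
    then obtain x y where "(x,y) \<in> \<theta>" "x' = e x" "y' = e y" by auto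
    then show "(y', x') \<in> ?T" using eq unfolding equiv_def sym_def by auto
  next
    fix x' y' z' assume a: "(x', y') \<in> ?T" "(y', z') \<in> ?T"
    then obtain x y y2 z where xy: "(x,y) \<in> \<theta>" "x' = e x" "y' = e y" "(y2,z) \<in> \<theta>" "y' = e y2" "z' = e z" by auto
    have "y \<in> fst A" "y2 \<in> fst A" using xy sub by auto
    then have "y = y2" using xy inj unfolding inj_on_def by metis
    then have "(x, z) \<in> \<theta>" using xy eq unfolding equiv_def trans_def by blast
    then show "(x', z') \<in> ?T" using xy by auto
  qed
  moreover have "(snd A' f xs', snd A' f ys') \<in> ?T"
    if a: "length xs' = ar f" "length ys' = ar f" "set xs' \<subseteq> fst A'" "set ys' \<subseteq> fst A'"
      "list_all2 (\<lambda>x y. (x, y) \<in> ?T) xs' ys'" for f xs' ys'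
  proof -
    define xs where "xs = map (inv_into (fst A) e) xs'"
    define ys where "ys = map (inv_into (fst A) e) ys'"
    have inv: "\<And>x'. x' \<in> fst A' \<Longrightarrow> e (inv_into (fst A) e x') = x' \<and> inv_into (fst A) e x' \<in> fst A"
      using sur by (auto intro: f_inv_into_f inv_into_into)
    have xs: "map e xs = xs'" "set xs \<subseteq> fst A" unfolding xs_def using a(3) inv
      by (auto intro!: map_idI)
    have ys: "map e ys = ys'" "set ys \<subseteq> fst A" unfolding ys_def using a(4) inv
      by (auto intro!: map_idI)
    have "list_all2 (\<lambda>x y. (x, y) \<in> \<theta>) xs ys"
      unfolding list_all2_conv_all_nth
    proof (intro conjI allI impI)
      show "length xs = length ys" using a unfolding xs_def ys_def by simp
    next
      fix i assume i: "i < length xs"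
      have ii: "i < length xs'" "i < length ys'" using i a unfolding xs_def by auto
      have "(xs' ! i, ys' ! i) \<in> ?T" using a(5) ii unfolding list_all2_conv_all_nth by auto
      moreover have "xs' ! i = e (xs ! i)" "ys' ! i = e (ys ! i)"
        using ii xs(1) ys(1) by auto
      moreover have "xs ! i \<in> fst A" "ys ! i \<in> fst A" using xs(2) ys(2) ii
        unfolding xs_def ys_def by auto
      ultimately show "(xs ! i, ys ! i) \<in> \<theta>" using mem by auto
    qed
    then have "(snd A f xs, snd A f ys) \<in> \<theta>"
      using c a xs ys unfolding congruence_def xs_def ys_def by auto
    moreover have "e (snd A f xs) = snd A' f xs'" "e (snd A f ys) = snd A' f ys'"
      using h xs ys a unfolding hom_def xs_def ys_def by auto
    ultimately show ?thesis by force
  qed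
  ultimately show ?thesis unfolding congruence_def by blast
qed

lemma perm_pull_one:
  assumes h: "hom ar A A' e" and inj: "inj_on e (fst A)" and sur: "e ` fst A = fst A'"
    and cp: "cong_permutable ar A'"
    and c1: "congruence ar A \<theta>1" and c2: "congruence ar A \<theta>2"
  shows "\<theta>1 O \<theta>2 \<subseteq> \<theta>2 O \<theta>1"
proof
  fix p assume "p \<in> \<theta>1 O \<theta>2"
  then obtain x y z where p: "p = (x,z)" "(x,y) \<in> \<theta>1" "(y,z) \<in> \<theta>2" by auto
  let ?T1 = "(\<lambda>(x,y). (e x, e y)) ` \<theta>1" and ?T2 = "(\<lambda>(x,y). (e x, e y)) ` \<theta>2"
  have C1: "congruence ar A' ?T1" and C2: "congruence ar A' ?T2"
    using cong_map[OF h inj sur c1] cong_map[OF h inj sur c2] .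
  have "(e x, e z) \<in> ?T1 O ?T2" using p by force
  then have "(e x, e z) \<in> ?T2 O ?T1" using cp C1 C2 unfolding cong_permutable_def by blast
  then obtain w' where w': "(e x, w') \<in> ?T2" "(w', e z) \<in> ?T1" by blast
  have "w' \<in> fst A'" using w' cong_sub[OF C1] by auto
  then obtain w where w: "w \<in> fst A" "w' = e w" using sur by auto
  have xz: "x \<in> fst A" "z \<in> fst A" using p cong_sub[OF c1] cong_sub[OF c2] by auto
  have "(x, w) \<in> \<theta>2" "(w, z) \<in> \<theta>1"
    using w' w xz cong_map_mem[OF inj c2] cong_map_mem[OF inj c1] by auto
  then show "p \<in> \<theta>2 O \<theta>1" using p by auto
qed

lemma perm_pull:
  assumes h: "hom ar A A' e" and inj: "inj_on e (fst A)" and sur: "e ` fst A = fst A'"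
    and cp: "cong_permutable ar A'"
  shows "cong_permutable ar A"
  unfolding cong_permutable_def
  using perm_pull_one[OF assms] by blast

lemma cong_refl: "congruence ar B \<theta> \<Longrightarrow> x \<in> fst B \<Longrightarrow> (x,x) \<in> \<theta>"
  unfolding congruence_def equiv_def refl_on_def by auto
lemma cong_sym: "congruence ar B \<theta> \<Longrightarrow> (x,y) \<in> \<theta> \<Longrightarrow> (y,x) \<in> \<theta>"
  unfolding congruence_def equiv_def sym_def by auto
lemma cong_trans: "congruence ar B \<theta> \<Longrightarrow> (x,y) \<in> \<theta> \<Longrightarrow> (y,z) \<in> \<theta> \<Longrightarrow> (x,z) \<in> \<theta>"
  unfolding congruence_def equiv_def trans_def by blast
lemma cong_app: "congruence ar B \<theta> \<Longrightarrow> length xs = ar f \<Longrightarrow> length ys = ar f \<Longrightarrow>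
   set xs \<subseteq> fst B \<Longrightarrow> set ys \<subseteq> fst B \<Longrightarrow> (\<forall>i<length xs. (xs!i, ys!i) \<in> \<theta>) \<Longrightarrow>
   (snd B f xs, snd B f ys) \<in> \<theta>"
  unfolding congruence_def by (auto simp: list_all2_conv_all_nth)

lemma cong_restrict:
  assumes c: "congruence ar B \<theta>" and s: "subalgebra ar A B"
  shows "congruence ar (A, snd B) (\<theta> \<inter> A \<times> A)"
proof -
  have AS: "A \<subseteq> fst B" and cl: "closed_under ar (snd B) A" using s unfolding subalgebra_def by auto
  have "equiv A (\<theta> \<inter> A \<times> A)"
    unfolding equiv_def refl_on_def sym_def trans_def
    using AS cong_refl[OF c] cong_sym[OF c] cong_trans[OF c] by blast
  moreover have "(snd B f xs, snd B f ys) \<in> \<theta> \<inter> A \<times> A"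
    if "length xs = ar f" "length ys = ar f" "set xs \<subseteq> A" "set ys \<subseteq> A"
       "list_all2 (\<lambda>x y. (x, y) \<in> \<theta> \<inter> A \<times> A) xs ys" for f xs ys
  proof -
    have "(snd B f xs, snd B f ys) \<in> \<theta>"
      by (rule cong_app[OF c]) (use that AS in \<open>auto simp: list_all2_conv_all_nth\<close>)
    moreover have "snd B f xs \<in> A" "snd B f ys \<in> A" using that cl unfolding closed_under_def by auto
    ultimately show ?thesis by blast
  qed
  ultimately show ?thesis unfolding congruence_def fst_conv snd_conv by blast
qed

fun unV :: "('f, 'a + 'b) trm \<Rightarrow> 'a" where
  "unV (Var (Inl x)) = x"
| "unV _ = undefined"

theorem mainTheorem12:
  fixes ar :: "'f \<Rightarrow> nat"
    and \<Sigma> :: "(('f, nat) trm \<times> ('f, nat) trm) set"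
    and B :: "('f, 'a) alg"
  assumes "identities ar \<Sigma>"
    and "cp_variety ar \<Sigma> TYPE('a)"
    and "in_var ar \<Sigma> B"
    and "\<exists>A. subalgebra ar A B \<and> fully_epic_in ar \<Sigma> A B"
  shows "FSI ar B"
proof -
  note ids = assms(1) and cpv = assms(2) and inB = assms(3)
  obtain A where sub: "subalgebra ar A B" and fe: "fully_epic_in ar \<Sigma> A B" using assms(4) by blast
  define S where "S = fst B"
  define F where "F = snd B"
  have B_eq: "B = (S, F)" unfolding S_def F_def by simp
  have AS: "A \<subset> S" and full: "\<And>\<theta>. congruence ar B \<theta> \<Longrightarrow> \<theta> \<noteq> Id_on S \<Longrightarrow> \<forall>b\<in>S. \<exists>a\<in>A. (b, a) \<in> \<theta>"
    and epic: "epic_in ar \<Sigma> A B"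
    using fe unfolding fully_epic_in_def full_in_def S_def by auto
  have Ane: "A \<noteq> {}" and clA: "closed_under ar F A" using sub unfolding subalgebra_def F_def by auto
  have clS: "closed_under ar F S" using inB unfolding in_var_def algebra_def S_def F_def by auto
  have nontriv: "\<exists>x\<in>S. \<exists>y\<in>S. x \<noteq> y"
  proof -
    obtain a where "a \<in> A" using Ane by auto
    moreover obtain b where "b \<in> S" "b \<notin> A" using AS by auto
    moreover have "a \<in> S" using AS \<open>a \<in> A\<close> by auto
    ultimately show ?thesis by (intro bexI[of _ a] bexI[of _ b]) auto
  qed
  define e :: "'a \<Rightarrow> ('f, 'a + 'a) trm" where "e = (\<lambda>x. Var (Inl x))"
  have einj: "\<And>x y. e x = e y \<longleftrightarrow> x = y" unfolding e_def by simp
  have unVe: "\<And>xs. map unV (map e xs) = xs" unfolding e_def by (simp add: comp_def)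
  define AA :: "('f, 'a) alg" where "AA = (A, F)"
  define A' :: "('f, ('f, 'a) univ) alg" where "A' = (e ` A, \<lambda>f ts. e (F f (map unV ts)))"
  have homA: "hom ar AA A' e" unfolding hom_def AA_def A'_def using unVe by auto
  have inAA: "in_var ar \<Sigma> AA"
    unfolding in_var_def algebra_def AA_def
  proof (intro conjI ballI)
    show "fst (A, F) \<noteq> {}" using Ane by simp
    show "closed_under ar (snd (A, F)) (fst (A, F))" using clA by simp
  next
    fix eq assume eq: "eq \<in> \<Sigma>"
    show "satisfies (A, F) eq" unfolding satisfies_def
    proof (intro allI impI)
      fix \<sigma> :: "nat \<Rightarrow> 'a" assume "range \<sigma> \<subseteq> fst (A, F)"
      then have "range \<sigma> \<subseteq> fst B" using AS unfolding S_def by auto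
      then show "eval (snd (A, F)) \<sigma> (fst eq) = eval (snd (A, F)) \<sigma> (snd eq)"
        using inB eq unfolding in_var_def satisfies_def F_def by auto
    qed
  qed
  have inA': "in_var ar \<Sigma> A'" using image_in_var[OF ids inAA homA] unfolding AA_def A'_def by simp
  have cpA': "cong_permutable ar A'" using cpv inA' unfolding cp_variety_def by blast
  have cpAA: "cong_permutable ar AA"
    by (rule perm_pull[OF homA _ _ cpA']) (auto simp: AA_def A'_def inj_on_def einj)
  have PA: "\<And>\<theta>1 \<theta>2. congruence ar B \<theta>1 \<Longrightarrow> congruence ar B \<theta>2 \<Longrightarrow>
      (\<theta>1 \<inter> A \<times> A) O (\<theta>2 \<inter> A \<times> A) = (\<theta>2 \<inter> A \<times> A) O (\<theta>1 \<inter> A \<times> A)"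
  proof -
    fix \<theta>1 \<theta>2 assume "congruence ar B \<theta>1" "congruence ar B \<theta>2"
    then have "congruence ar AA (\<theta>1 \<inter> A \<times> A)" "congruence ar AA (\<theta>2 \<inter> A \<times> A)"
      using cong_restrict[OF _ sub] unfolding AA_def F_def by auto
    then show "(\<theta>1 \<inter> A \<times> A) O (\<theta>2 \<inter> A \<times> A) = (\<theta>2 \<inter> A \<times> A) O (\<theta>1 \<inter> A \<times> A)"
      using cpAA unfolding cong_permutable_def by blast
  qed
  have "\<theta>1 = Id_on S \<or> \<theta>2 = Id_on S"
    if c1: "congruence ar B \<theta>1" and c2: "congruence ar B \<theta>2" and meet: "\<theta>1 \<inter> \<theta>2 = Id_on S"
    for \<theta>1 \<theta>2
  proof (rule ccontr)
    assume "\<not> (\<theta>1 = Id_on S \<or> \<theta>2 = Id_on S)"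
    then have full1: "\<forall>b\<in>S. \<exists>a\<in>A. (b, a) \<in> \<theta>1" and full2: "\<forall>b\<in>S. \<exists>a\<in>A. (b, a) \<in> \<theta>2"
      using full c1 c2 by auto
    have s1: "\<theta>1 \<subseteq> S \<times> S" and s2: "\<theta>2 \<subseteq> S \<times> S" using cong_sub[OF c1] cong_sub[OF c2] unfolding S_def by auto
    have AS': "A \<subseteq> S" using AS by auto
    note r1 = cong_refl[OF c1, folded S_def] and r2 = cong_refl[OF c2, folded S_def]
    note sy1 = cong_sym[OF c1] and sy2 = cong_sym[OF c2]
    note t1 = cong_trans[OF c1] and t2 = cong_trans[OF c2]
    note P12 = PA[OF c1 c2]
    define L where "L = {(b, b'). \<exists>a a'. a \<in> A \<and> a' \<in> A \<and> (b, a) \<in> \<theta>1 \<and> (a, a') \<in> \<theta>2 \<and> (a', b') \<in> \<theta>1}"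
    have LS: "L \<subseteq> S \<times> S" using s1 unfolding L_def by blast
    have Lrefl: "\<And>b. b \<in> S \<Longrightarrow> (b, b) \<in> L"
    proof -
      fix b assume b: "b \<in> S"
      then obtain a where "a \<in> A" "(b, a) \<in> \<theta>1" using full1 by auto
      then show "(b, b) \<in> L" unfolding L_def using r2 sy1 AS' by blast
    qed
    have Lsym: "\<And>b b'. (b, b') \<in> L \<Longrightarrow> (b', b) \<in> L"
      unfolding L_def using sy1 sy2 by blast
    have Ltrans: "\<And>x y z. (x, y) \<in> L \<Longrightarrow> (y, z) \<in> L \<Longrightarrow> (x, z) \<in> L"
    proof -
      fix x y z assume "(x, y) \<in> L" "(y, z) \<in> L"
      then obtain a1 a2 a3 a4 where a: "a1 \<in> A" "a2 \<in> A" "a3 \<in> A" "a4 \<in> A"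
        "(x, a1) \<in> \<theta>1" "(a1, a2) \<in> \<theta>2" "(a2, y) \<in> \<theta>1"
        "(y, a3) \<in> \<theta>1" "(a3, a4) \<in> \<theta>2" "(a4, z) \<in> \<theta>1" unfolding L_def by blast
      have "(a2, a3) \<in> \<theta>1" using a t1 by blast
      then have "(a1, a3) \<in> (\<theta>2 \<inter> A \<times> A) O (\<theta>1 \<inter> A \<times> A)" using a by blast
      then have "(a1, a3) \<in> (\<theta>1 \<inter> A \<times> A) O (\<theta>2 \<inter> A \<times> A)" using P12 by simp
      then obtain c where c: "c \<in> A" "(a1, c) \<in> \<theta>1" "(c, a3) \<in> \<theta>2" by blast
      have "(x, c) \<in> \<theta>1" "(c, a4) \<in> \<theta>2" using a c t1 t2 by blast+
      then show "(x, z) \<in> L" unfolding L_def using a c by blast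
    qed
    have cL: "congruence ar B L"
      unfolding congruence_def
    proof (intro conjI allI impI)
      show "equiv (fst B) L" unfolding equiv_def refl_on_def sym_def trans_def S_def[symmetric]
        using LS Lrefl Lsym Ltrans by blast
    next
      fix f xs ys
      assume a: "length xs = ar f \<and> length ys = ar f \<and> set xs \<subseteq> fst B \<and> set ys \<subseteq> fst B
        \<and> list_all2 (\<lambda>x y. (x, y) \<in> L) xs ys"
      have "\<forall>i. \<exists>p. i < length xs \<longrightarrow> (fst p \<in> A \<and> snd p \<in> A \<and> (xs!i, fst p) \<in> \<theta>1
          \<and> (fst p, snd p) \<in> \<theta>2 \<and> (snd p, ys!i) \<in> \<theta>1)"
        using a unfolding list_all2_conv_all_nth L_def by auto
      from choice[OF this] obtain g where g: "\<And>i. i < length xs \<Longrightarrow> fst (g i) \<in> A \<and> snd (g i) \<in> A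
          \<and> (xs!i, fst (g i)) \<in> \<theta>1 \<and> (fst (g i), snd (g i)) \<in> \<theta>2 \<and> (snd (g i), ys!i) \<in> \<theta>1" by blast
      define us where "us = map (fst \<circ> g) [0..<length xs]"
      define vs where "vs = map (snd \<circ> g) [0..<length xs]"
      have lus: "length us = ar f" "length vs = ar f" using a unfolding us_def vs_def by auto
      have sus: "set us \<subseteq> A" "set vs \<subseteq> A" using g unfolding us_def vs_def by auto
      have sB: "set us \<subseteq> fst B" "set vs \<subseteq> fst B" using sus AS' unfolding S_def by auto
      have "(F f xs, F f us) \<in> \<theta>1"
        unfolding F_def by (rule cong_app[OF c1]) (use a lus sB g in \<open>auto simp: us_def\<close>)
      moreover have "(F f us, F f vs) \<in> \<theta>2"
        unfolding F_def by (rule cong_app[OF c2]) (use a lus sB g in \<open>auto simp: us_def vs_def\<close>)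
      moreover have "(F f vs, F f ys) \<in> \<theta>1"
        unfolding F_def by (rule cong_app[OF c1]) (use a lus sB g in \<open>auto simp: vs_def\<close>)
      moreover have "F f us \<in> A" "F f vs \<in> A" using clA lus sus unfolding closed_under_def by auto
      ultimately show "(snd B f xs, snd B f ys) \<in> L" unfolding L_def F_def by blast
    qed
    define rep where "rep = (\<lambda>b. SOME x. (b, x) \<in> L)"
    have R1: "\<And>b. b \<in> S \<Longrightarrow> (b, rep b) \<in> L" unfolding rep_def using Lrefl by (rule someI)
    have R2: "\<And>b b'. (b, b') \<in> L \<Longrightarrow> rep b = rep b'"
    proof -
      fix b b' assume "(b, b') \<in> L"
      then have "(\<lambda>x. (b, x) \<in> L) = (\<lambda>x. (b', x) \<in> L)" using Lsym Ltrans by blast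
      then show "rep b = rep b'" unfolding rep_def by simp
    qed
    have R3: "\<And>b b'. b \<in> S \<Longrightarrow> b' \<in> S \<Longrightarrow> rep b = rep b' \<Longrightarrow> (b, b') \<in> L"
      using R1 Lsym Ltrans by metis
    have repS: "\<And>b. b \<in> S \<Longrightarrow> rep b \<in> S" using R1 LS by blast
    define q where "q = (\<lambda>b. e (rep b))"
    define C :: "('f, ('f, 'a) univ) alg" where "C = (q ` S, \<lambda>f ts. q (F f (map unV ts)))"
    have unVq: "\<And>xs. map unV (map q xs) = map rep xs" unfolding q_def e_def by (simp add: comp_def)
    have qF: "q (F f xs) = snd C f (map q xs)" if a: "length xs = ar f" "set xs \<subseteq> S" for f xs
    proof -
      have "set (map rep xs) \<subseteq> S" using a repS by auto
      have xi: "\<And>i. i < length xs \<Longrightarrow> (xs!i, rep (xs!i)) \<in> L" using a R1 nth_mem by blast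
      have "(F f xs, F f (map rep xs)) \<in> L"
        unfolding F_def by (rule cong_app[OF cL]) (use a xi repS in \<open>auto simp: S_def\<close>)
      then have "q (F f xs) = q (F f (map rep xs))" unfolding q_def using R2 by simp
      moreover have "snd C f (map q xs) = q (F f (map unV (map q xs)))" unfolding C_def by simp
      ultimately show ?thesis by (simp only: unVq)
    qed
    have homq: "hom ar B C q" unfolding hom_def using qF by (auto simp: C_def S_def F_def)
    have inC: "in_var ar \<Sigma> C" by (rule image_in_var[OF ids inB homq]) (simp add: C_def S_def)
    define ch where "ch = (\<lambda>b. SOME a. a \<in> A \<and> (b, a) \<in> \<theta>2)"
    have CH: "\<And>b. b \<in> S \<Longrightarrow> ch b \<in> A \<and> (b, ch b) \<in> \<theta>2"
      unfolding ch_def using full2 by (metis (mono_tags, lifting) someI_ex)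
    define hh where "hh = (\<lambda>b. q (ch b))"
    have hhF: "hh (F f xs) = snd C f (map hh xs)" if a: "length xs = ar f" "set xs \<subseteq> S" for f xs
    proof -
      have chs: "set (map ch xs) \<subseteq> A" using a CH by auto
      have FS: "F f xs \<in> S" using clS a unfolding closed_under_def by auto
      have FA: "F f (map ch xs) \<in> A" using clA chs a unfolding closed_under_def by auto
      have xi: "\<And>i. i < length xs \<Longrightarrow> (xs!i, ch (xs!i)) \<in> \<theta>2" using a CH nth_mem by blast
      have "(F f xs, F f (map ch xs)) \<in> \<theta>2"
        unfolding F_def by (rule cong_app[OF c2]) (use a xi chs AS' in \<open>auto simp: S_def\<close>)
      then have "(ch (F f xs), F f (map ch xs)) \<in> \<theta>2" using CH[OF FS] sy2 t2 by blast
      then have "(ch (F f xs), F f (map ch xs)) \<in> L"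
        unfolding L_def using CH[OF FS] FA r1 AS' by blast
      then have "hh (F f xs) = q (F f (map ch xs))" unfolding hh_def q_def using R2 by simp
      also have "\<dots> = snd C f (map q (map ch xs))" using qF[of "map ch xs" f] a chs AS' by auto
      finally show ?thesis unfolding hh_def by (simp add: comp_def)
    qed
    have im: "hh ` fst B \<subseteq> fst C"
    proof
      fix y assume "y \<in> hh ` fst B"
      then obtain b where "b \<in> S" "y = q (ch b)" unfolding hh_def S_def by auto
      then have "ch b \<in> S" "y = q (ch b)" using CH AS' by auto
      then show "y \<in> fst C" unfolding C_def by auto
    qed
    have homh: "hom ar B C hh" unfolding hom_def using hhF im
      by (auto simp: S_def F_def)
    have agree: "\<forall>a\<in>A. q a = hh a"
    proof
      fix a assume a: "a \<in> A"
      then have "a \<in> S" using AS' by auto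
      then have "(a, ch a) \<in> L" unfolding L_def using CH a r1 AS' by blast
      then show "q a = hh a" unfolding hh_def q_def using R2 by simp
    qed
    have all: "\<forall>b\<in>S. q b = hh b"
      using epic inC homq homh agree unfolding epic_in_def S_def by blast
    obtain b where b: "b \<in> S" "b \<notin> A" using AS by auto
    have "rep b = rep (ch b)" using all b unfolding hh_def q_def by (simp add: einj)
    then have "(b, ch b) \<in> L" using R3 b CH AS' by blast
    then obtain a1 a2 where a: "a1 \<in> A" "a2 \<in> A" "(b, a1) \<in> \<theta>1" "(a1, a2) \<in> \<theta>2" "(a2, ch b) \<in> \<theta>1"
      unfolding L_def by blast
    have chb: "ch b \<in> A" "(b, ch b) \<in> \<theta>2" using CH b by auto
    have "(a1, ch b) \<in> (\<theta>2 \<inter> A \<times> A) O (\<theta>1 \<inter> A \<times> A)" using a chb by blast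
    then have "(a1, ch b) \<in> (\<theta>1 \<inter> A \<times> A) O (\<theta>2 \<inter> A \<times> A)" using P12 by simp
    then obtain c where c: "c \<in> A" "(a1, c) \<in> \<theta>1" "(c, ch b) \<in> \<theta>2" by blast
    have "(b, c) \<in> \<theta>1" using a c t1 by blast
    moreover have "(b, c) \<in> \<theta>2" using chb c sy2 t2 by blast
    ultimately have "(b, c) \<in> Id_on S" using meet by blast
    then show False using b c by auto
  qed
  then show ?thesis unfolding FSI_def using nontriv S_def by auto
qed

end
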